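(* Let $X_1,X_2,\dots$ be i.i.d. standard normal random variables and $\{Y_{ij}\}_{1\le i<j}$ i.i.d. standard normal random variables independent of the $X_i$. Let $c_n:=\sqrt{2\log n}$, $d_n:=\sqrt{2\log n}-\frac{\log\log n+\log(4\pi)}{2\sqrt{2\log n}}$, $Z_i:=c_n(X_i-d_n)$ for $1\le i\le n$, and $Z_{(1)}\ge\dots\ge Z_{(n)}$ the order statistics of $Z_1,\dots,Z_n$. Fix $c>0$. Then for every $\varepsilon>0$ there exists $C_\varepsilon>0$ such that for all integers $K\ge C_\varepsilon$, $$\liminf_{n\to\infty}\mathbb{P}\left(\operatorname*{argmax}_{(i,j):1\le i<j\le n}\left\{\frac{Z_{(i)}+Z_{(j)}}{\sqrt2}+cY_{ij}\right\}\in[K]\times[K]\right)\ge1-\varepsilon,$$ where $[K]=\{1,2,\dots,K\}$. *)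

theory Defs
  imports "HOL-Probability.Probability"
begin

definition cn :: "nat \<Rightarrow> real" where
  "cn n = sqrt (2 * ln (real n))"

definition dn :: "nat \<Rightarrow> real" where
  "dn n = sqrt (2 * ln (real n)) - (ln (ln (real n)) + ln (4 * pi)) / (2 * sqrt (2 * ln (real n)))"

definition ord_stat :: "(nat \<Rightarrow> real) \<Rightarrow> nat \<Rightarrow> nat \<Rightarrow> real" where
  "ord_stat z n k = rev (sort (map z [1..<n+1])) ! (k - 1)"

definition pairs :: "nat \<Rightarrow> (nat \<times> nat) set" where
  "pairs n = {(i, j). 1 \<le> i \<and> i < j \<and> j \<le> n}"

definition argmax_in :: "(nat \<Rightarrow> nat \<Rightarrow> real) \<Rightarrow> nat \<Rightarrow> nat \<Rightarrow> bool" where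
  "argmax_in W n K \<longleftrightarrow>
     (\<forall>(i, j) \<in> pairs n. W i j = Max ((\<lambda>(a, b). W a b) ` pairs n) \<longrightarrow> i \<le> K \<and> j \<le> K)"

end

theory Submission
  imports Defs "HOL-Real_Asymp.Real_Asymp" "HOL-Library.Discrete_Functions"
begin


definition tailI :: "real \<Rightarrow> ennreal" where
  "tailI x = (\<integral>\<^sup>+u. ennreal (std_normal_density u) * indicator {x<..} u \<partial>lborel)"

lemma std_normal_deriv: "((\<lambda>u. std_normal_density u) has_real_derivative (- u * std_normal_density u)) (at u)"
  unfolding std_normal_density_def
  by (auto intro!: derivative_eq_intros simp: field_simps power2_eq_square)

lemma tailI_upper:
  assumes "x > 0"
  shows "tailI x \<le> ennreal (std_normal_density x / x)"
proof -
  have "tailI x \<le> (\<integral>\<^sup>+u. ennreal (u * std_normal_density u / x) * indicator {x..} u \<partial>lborel)"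
    unfolding tailI_def
  proof (intro nn_integral_mono)
    fix u :: real
    show "ennreal (std_normal_density u) * indicator {x<..} u \<le> ennreal (u * std_normal_density u / x) * indicator {x..} u"
    proof (cases "x < u")
      case True
      have "std_normal_density u \<le> u * std_normal_density u / x"
        using True assms by (simp add: field_simps mult_right_mono)
      then show ?thesis using True by (auto simp: indicator_def intro: ennreal_leI)
    qed (auto simp: indicator_def)
  qed
  also have "\<dots> = ennreal (0 - (- std_normal_density x / x))"
  proof (rule nn_integral_FTC_atLeast[where F="\<lambda>u. - std_normal_density u / x" and T=0])
    show "(\<lambda>u. u * std_normal_density u / x) \<in> borel_measurable borel" by measurable
    show "((\<lambda>u. - std_normal_density u / x) has_real_derivative u * std_normal_density u / x) (at u)" if "x \<le> u" for u
      using std_normal_deriv[of u] assms by (auto intro!: derivative_eq_intros simp: field_simps)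
    show "0 \<le> u * std_normal_density u / x" if "x \<le> u" for u
      using that assms by simp
    show "((\<lambda>u. - std_normal_density u / x) \<longlongrightarrow> 0) at_top"
    proof -
      have "((\<lambda>(u::real). exp (- (u\<^sup>2) / 2)) \<longlongrightarrow> 0) at_top" by real_asymp
      then have "((\<lambda>u. - (1/sqrt(2*pi) * exp(- (u\<^sup>2) / 2)) / x) \<longlongrightarrow> -(1/sqrt(2*pi)*0)/x) at_top"
        using assms by (intro tendsto_intros) auto
      then show ?thesis unfolding std_normal_density_def by simp
    qed
  qed
  finally show ?thesis by simp
qed

lemma tailI_lower:
  assumes "x > 0" "h > 0"
  shows "tailI x \<ge> ennreal (h * std_normal_density (x + h))"
proof -
  have "(\<integral>\<^sup>+u. ennreal (std_normal_density (x+h)) * indicator {x<..x+h} u \<partial>lborel) \<le> tailI x"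
    unfolding tailI_def
  proof (intro nn_integral_mono)
    fix u :: real
    show "ennreal (std_normal_density (x+h)) * indicator {x<..x+h} u \<le> ennreal (std_normal_density u) * indicator {x<..} u"
    proof (cases "x < u \<and> u \<le> x + h")
      case True
      have "std_normal_density (x+h) \<le> std_normal_density u"
      proof -
        have "u^2 \<le> (x+h)^2" using True assms by (intro power_mono) auto
        then show ?thesis unfolding std_normal_density_def
          by (intro mult_left_mono) auto
      qed
      then show ?thesis using True by (auto simp: indicator_def intro: ennreal_leI)
    qed (auto simp: indicator_def)
  qed
  moreover have "(\<integral>\<^sup>+u. ennreal (std_normal_density (x+h)) * indicator {x<..x+h} u \<partial>lborel)
      = ennreal (h * std_normal_density (x + h))"
    using assms by (simp add: nn_integral_cmult_indicator ennreal_mult' mult.commute)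
  ultimately show ?thesis by simp
qed


definition Qt :: "real \<Rightarrow> real" where "Qt x = enn2real (tailI x)"

lemma Qt_nonneg: "0 \<le> Qt x" by (simp add: Qt_def)

lemma Qt_upper: "x > 0 \<Longrightarrow> Qt x \<le> std_normal_density x / x"
  unfolding Qt_def using tailI_upper[of x]
  by (metis enn2real_ennreal enn2real_mono ennreal_less_top divide_nonneg_pos normal_density_nonneg)

lemma Qt_lower:
  assumes "x \<ge> 1"
  shows "Qt x \<ge> std_normal_density x / (x * exp (3/2))"
proof -
  have x0: "x > 0" using assms by simp
  have "(1/x) * std_normal_density (x + 1/x) = std_normal_density x / x * exp (-1 - 1/(2*x\<^sup>2))"
    unfolding std_normal_density_def using x0
    by (simp add: power2_eq_square field_simps flip: exp_add)
  also have "\<dots> \<ge> std_normal_density x / x * exp (-3/2)"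
  proof -
    have h: "1/(2*x\<^sup>2) \<le> 1/2" using assms by (simp add: field_simps power2_eq_square) (metis mult_mono zero_le_one mult_1_left order_trans)
    have "exp (-3/2) \<le> exp (-1 - 1/(2*x\<^sup>2))" using h by simp
    then show ?thesis using x0 by (intro mult_left_mono) auto
  qed
  finally have *: "std_normal_density x / (x * exp (3/2)) \<le> (1/x) * std_normal_density (x + 1/x)"
    by (simp add: exp_minus field_simps)
  have "ennreal ((1/x) * std_normal_density (x + 1/x)) \<le> tailI x"
    using tailI_lower[of x "1/x"] x0 by simp
  moreover have "tailI x < top" using tailI_upper[of x] x0
    by (meson ennreal_less_top order.strict_trans1)
  ultimately have "(1/x) * std_normal_density (x + 1/x) \<le> Qt x"
    unfolding Qt_def by (metis enn2real_ennreal enn2real_mono x0 less_eq_real_def divide_nonneg_pos mult_nonneg_nonneg normal_density_nonneg zero_le_one) 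
  with * show ?thesis by simp
qed

lemma Qt_gauss:
  assumes "t \<ge> 1"
  shows "Qt t \<le> exp (- t\<^sup>2 / 2)"
proof -
  have "Qt t \<le> std_normal_density t / t" using assms by (intro Qt_upper) auto
  also have "\<dots> \<le> std_normal_density t" using assms
    by (simp add: divide_le_eq mult_le_cancel_left1 normal_density_nonneg)
       (metis normal_density_nonneg not_le)
  also have "\<dots> \<le> exp (- t\<^sup>2 / 2)" unfolding std_normal_density_def
  proof -
    have s: "1 \<le> sqrt (2*pi)" using pi_gt3 by simp
    have "exp (- t\<^sup>2 / 2) / sqrt (2*pi) \<le> exp (- t\<^sup>2 / 2) / 1"
      using s by (intro divide_left_mono) auto
    then show "1 / sqrt (2 * pi) * exp (- t\<^sup>2 / 2) \<le> exp (- t\<^sup>2 / 2)" by simp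
  qed
  finally show ?thesis .
qed

lemma prob_gt_Qt:
  assumes "prob_space M" "distributed M lborel V std_normal_density"
  shows "measure M {\<omega>\<in>space M. x < V \<omega>} = Qt x"
proof -
  have "{\<omega>\<in>space M. x < V \<omega>} = V -` {x<..} \<inter> space M" by auto
  then have "emeasure M {\<omega>\<in>space M. x < V \<omega>} = tailI x"
    using distributed_emeasure[OF assms(2), of "{x<..}"] by (simp add: tailI_def)
  then show ?thesis unfolding Qt_def measure_def by simp
qed


lemma sorted_desc_nth_gt:
  fixes L :: "real list"
  assumes "sorted_wrt (\<ge>) L" "i < length L"
  shows "(t < L ! i) \<longleftrightarrow> i < length (filter (\<lambda>v. t < v) L)"
  using assms
proof (induction L arbitrary: i)
  case Nil then show ?case by simp
next
  case (Cons a L)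
  have le: "\<forall>b\<in>set L. b \<le> a" using Cons.prems(1) by simp
  show ?case
  proof (cases "t < a")
    case True
    then show ?thesis using Cons by (cases i) auto
  next
    case False
    have "filter (\<lambda>v. t < v) L = []" unfolding filter_empty_conv
    proof
      fix x assume "x \<in> set L" then have "x \<le> a" using le by auto
      then show "\<not> t < x" using False by (meson less_le_trans)
    qed
    moreover have "\<not> t < (a # L) ! i"
      using False le Cons.prems(2) by (cases i) (auto, meson nth_mem order.strict_trans2)
    ultimately show ?thesis using False by simp
  qed
qed

lemma length_filter_sort: "length (filter P (sort xs)) = length (filter P xs)"
  by (metis mset_filter mset_sort size_mset)

lemma ord_stat_gt:
  assumes "1 \<le> k" "k \<le> n"
  shows "(t < ord_stat z n k) \<longleftrightarrow> k \<le> card {l\<in>{1..n}. t < z l}"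
proof -
  let ?xs = "map z [1..<n+1]"
  let ?L = "rev (sort ?xs)"
  have s: "sorted_wrt (\<ge>) ?L" by (simp add: sorted_wrt_rev)
  have len: "k - 1 < length ?L" using assms by simp
  have "length (filter (\<lambda>v. t < v) ?L) = length (filter (\<lambda>v. t < v) ?xs)"
    by (simp add: length_filter_sort flip: rev_filter)
  also have "\<dots> = length (filter (\<lambda>l. t < z l) [1..<n+1])" by (simp add: filter_map o_def)
  also have "\<dots> = card {l\<in>{1..n}. t < z l}"
    by (subst distinct_card[symmetric]) (auto intro!: arg_cong[where f=card])
  finally show ?thesis
    using sorted_desc_nth_gt[OF s len, of t] assms unfolding ord_stat_def by auto
qed

lemma ord_stat_le_first:
  assumes "1 \<le> i" "i \<le> n"
  shows "ord_stat z n i \<le> ord_stat z n 1"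
proof (rule ccontr)
  assume "\<not> ?thesis"
  then have "ord_stat z n 1 < ord_stat z n i" by simp
  then have "i \<le> card {l\<in>{1..n}. ord_stat z n 1 < z l}" using ord_stat_gt[OF assms] by blast
  then have c1: "1 \<le> card {l\<in>{1..n}. ord_stat z n 1 < z l}" using assms(1) by linarith
  have "1 \<le> n" using assms by simp
  from ord_stat_gt[OF order_refl this, of "ord_stat z n 1" z] c1
  have "ord_stat z n 1 < ord_stat z n 1" by blast
  then show False by simp
qed

lemma argmax_in_iff:
  "argmax_in W n K \<longleftrightarrow>
    (\<forall>p\<in>pairs n. (K < fst p \<or> K < snd p) \<longrightarrow> (\<exists>q\<in>pairs n. W (fst p) (snd p) < W (fst q) (snd q)))"
proof -
  have fin: "finite (pairs n)"
    by (rule finite_subset[of _ "{1..n} \<times> {1..n}"]) (auto simp: pairs_def)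
  show ?thesis
    unfolding argmax_in_def
  proof (rule iffI)
    assume H: "\<forall>(i, j)\<in>pairs n. W i j = Max ((\<lambda>(a, b). W a b) ` pairs n) \<longrightarrow> i \<le> K \<and> j \<le> K"
    show "\<forall>p\<in>pairs n. (K < fst p \<or> K < snd p) \<longrightarrow> (\<exists>q\<in>pairs n. W (fst p) (snd p) < W (fst q) (snd q))"
    proof (intro ballI impI)
    fix p assume p: "p \<in> pairs n" "K < fst p \<or> K < snd p"
    have "W (fst p) (snd p) \<noteq> Max ((\<lambda>(a, b). W a b) ` pairs n)" using H p by (cases p) auto
    moreover have "W (fst p) (snd p) \<le> Max ((\<lambda>(a, b). W a b) ` pairs n)"
      using fin p by (intro Max_ge) (auto simp: image_iff case_prod_beta intro!: bexI[where x=p])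
    moreover have "Max ((\<lambda>(a, b). W a b) ` pairs n) \<in> (\<lambda>(a, b). W a b) ` pairs n"
      using fin p by (intro Max_in) auto
    then obtain q where "q \<in> pairs n" "Max ((\<lambda>(a, b). W a b) ` pairs n) = W (fst q) (snd q)"
      by (auto simp: case_prod_beta)
    ultimately show "\<exists>q\<in>pairs n. W (fst p) (snd p) < W (fst q) (snd q)" by force
    qed
  next
    assume H: "\<forall>p\<in>pairs n. (K < fst p \<or> K < snd p) \<longrightarrow> (\<exists>q\<in>pairs n. W (fst p) (snd p) < W (fst q) (snd q))"
    show "\<forall>(i, j)\<in>pairs n. W i j = Max ((\<lambda>(a, b). W a b) ` pairs n) \<longrightarrow> i \<le> K \<and> j \<le> K"
    proof -
      have "i \<le> K \<and> j \<le> K" if ij: "(i, j) \<in> pairs n" and m: "W i j = Max ((\<lambda>(a, b). W a b) ` pairs n)" for i j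
      proof (rule ccontr)
        assume "\<not> (i \<le> K \<and> j \<le> K)"
        then obtain q where q: "q \<in> pairs n" "W i j < W (fst q) (snd q)" using H ij by force
        have "W (fst q) (snd q) \<le> Max ((\<lambda>(a, b). W a b) ` pairs n)"
          using fin q by (intro Max_ge) (auto simp: image_iff case_prod_beta intro!: bexI[where x=q])
        then show False using q m by simp
      qed
      then show ?thesis by blast
    qed
  qed
qed

lemma deterministic:
  fixes z :: "nat \<Rightarrow> real" and Y :: "nat \<Rightarrow> nat \<Rightarrow> real" and \<gamma> :: "nat \<Rightarrow> real"
  assumes K2: "2 \<le> K" and n2: "2 \<le> n"
    and A: "2 \<le> card {l\<in>{1..n}. -a < z l}"
    and B: "\<And>k. 2^k \<le> n \<Longrightarrow> K < 2^(k+1) \<Longrightarrow> card {l\<in>{1..n}. - \<gamma> k < z l} < 2^k"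
    and C: "\<And>i j. (i, j) \<in> pairs n \<Longrightarrow> K < j \<Longrightarrow> c * Y i j < c * Y 1 2 + (\<gamma> (floor_log j) - a) / sqrt 2"
  shows "argmax_in (\<lambda>i j. (ord_stat z n i + ord_stat z n j) / sqrt 2 + c * Y i j) n K"
  unfolding argmax_in_iff
proof (intro ballI impI)
  fix p assume p: "p \<in> pairs n" "K < fst p \<or> K < snd p"
  obtain i j where pij: "p = (i, j)" by (cases p)
  have ij: "1 \<le> i" "i < j" "j \<le> n" using p pij by (auto simp: pairs_def)
  have Kj: "K < j" using p pij ij by auto
  have q: "(1, 2) \<in> pairs n" using n2 by (auto simp: pairs_def)
  define k where "k = floor_log j"
  have k1: "2^k \<le> j" unfolding k_def using ij by (intro floor_log_exp2_le) auto
  have k2: "j < 2^(k+1)" unfolding k_def using floor_log_exp2_gt[of j] by simp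
  have "card {l\<in>{1..n}. - \<gamma> k < z l} < 2^k" using B[of k] k1 k2 ij Kj by auto
  then have "\<not> (- \<gamma> k < ord_stat z n j)" using ord_stat_gt[of j n "- \<gamma> k" z] ij k1 by auto
  then have oj: "ord_stat z n j \<le> - \<gamma> k" by simp
  have o2: "- a < ord_stat z n 2" using ord_stat_gt[of 2 n "-a" z] A n2 by auto
  have oi: "ord_stat z n i \<le> ord_stat z n 1" using ord_stat_le_first[of i n z] ij by auto
  have cY: "c * Y i j < c * Y 1 2 + (\<gamma> k - a) / sqrt 2" using C[of i j] p pij Kj k_def by auto
  have "(ord_stat z n i + ord_stat z n j) / sqrt 2 + c * Y i j
        < (ord_stat z n 1 + ord_stat z n 2) / sqrt 2 + c * Y 1 2"
  proof -
    have "(ord_stat z n i + ord_stat z n j) / sqrt 2 \<le> (ord_stat z n 1 - \<gamma> k) / sqrt 2"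
      using oi oj by (intro divide_right_mono) auto
    moreover have "(ord_stat z n 1 - \<gamma> k) / sqrt 2 + (\<gamma> k - a) / sqrt 2 = (ord_stat z n 1 - a) / sqrt 2"
      by (simp add: field_simps)
    moreover have "(ord_stat z n 1 - a) / sqrt 2 < (ord_stat z n 1 + ord_stat z n 2) / sqrt 2"
      using o2 by (intro divide_strict_right_mono) auto
    ultimately show ?thesis using cY by linarith
  qed
  then show "\<exists>q\<in>pairs n. (ord_stat z n (fst p) + ord_stat z n (snd p)) / sqrt 2 + c * Y (fst p) (snd p)
      < (ord_stat z n (fst q) + ord_stat z n (snd q)) / sqrt 2 + c * Y (fst q) (snd q)"
    using q pij by force
qed


lemma ev1: "eventually (\<lambda>n::nat. 1 \<le> ln (real n)) sequentially" by real_asymp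
lemma ev2: "eventually (\<lambda>n::nat. ln (ln (real n)) + ln (4*pi) \<le> ln (real n)) sequentially" by real_asymp
lemma ev3: "eventually (\<lambda>n::nat. (ln (ln (real n)) + ln (4*pi))\<^sup>2 \<le> 8 * ln (real n)) sequentially" by real_asymp
lemma ev4: "eventually (\<lambda>n::nat. a\<^sup>2 \<le> 2 * ln (real n)) sequentially" by real_asymp
lemma ev5: "eventually (\<lambda>n::nat. 1 \<le> dn n - a / cn n) sequentially" unfolding dn_def cn_def by real_asymp

lemma key_identity:
  assumes L1: "1 \<le> ln (real n)"
  shows "real n * std_normal_density x
       = cn n * exp (ln (real n) - (ln (ln (real n)) + ln (4*pi)) / 2 - x\<^sup>2 / 2)"
proof -
  define L where "L = ln (real n)"
  have L0: "L > 0" using L1 L_def by simp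
  have n0: "real n > 0" using L1 by (cases "n = 0") auto
  have eL: "exp L = real n" using n0 L_def by simp
  have es: "exp ((ln L + ln (4*pi)) / 2) = sqrt (4 * pi * L)"
  proof -
    have "exp ((ln L + ln (4*pi)) / 2) = sqrt (exp (ln L + ln (4*pi)))"
      by (rule real_sqrt_unique[symmetric]) (auto simp: power2_eq_square simp flip: exp_add)
    also have "\<dots> = sqrt (4 * pi * L)" using L0 by (simp add: exp_add)
    finally show ?thesis .
  qed
  have "cn n * exp (L - (ln L + ln (4*pi)) / 2 - x\<^sup>2 / 2)
      = sqrt (2 * L) * exp L * exp (- x\<^sup>2 / 2) / exp ((ln L + ln (4*pi)) / 2)"
  proof -
    define S where "S = (ln L + ln (4*pi)) / 2"
    have "exp (L - S - x\<^sup>2 / 2) = exp ((L + (- x\<^sup>2 / 2)) - S)" by (simp add: algebra_simps)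
    also have "\<dots> = exp L * exp (- x\<^sup>2 / 2) / exp S" by (simp only: exp_diff exp_add)
    finally have "exp (L - S - x\<^sup>2 / 2) = exp L * exp (- x\<^sup>2 / 2) / exp S" .
    moreover have "cn n = sqrt (2 * L)" unfolding cn_def L_def ..
    ultimately show ?thesis unfolding S_def by (simp add: field_simps)
  qed
  also have "\<dots> = real n * exp (- x\<^sup>2 / 2) * (sqrt (2 * L) / sqrt (4 * pi * L))"
    using es eL by simp
  also have "sqrt (2 * L) / sqrt (4 * pi * L) = 1 / sqrt (2 * pi)"
    using L0 by (simp add: real_sqrt_divide[symmetric] field_simps real_sqrt_mult)
  finally show ?thesis unfolding std_normal_density_def L_def by simp
qed


lemma upper_n:
  assumes L1: "1 \<le> ln (real n)" and E2: "ln (ln (real n)) + ln (4*pi) \<le> ln (real n)"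
    and g0: "0 \<le> \<gamma>" and gL: "\<gamma> \<le> ln (real n) / 2"
  shows "real n * Qt (dn n - \<gamma> / cn n) \<le> 2 * exp \<gamma>"
proof -
  define L where "L = ln (real n)"
  define s where "s = ln L + ln (4*pi)"
  define c where "c = cn n"
  define x where "x = dn n - \<gamma> / cn n"
  have L0: "L \<ge> 1" using L1 L_def by simp
  have c2: "c\<^sup>2 = 2 * L" unfolding c_def cn_def L_def using L0 L_def by simp
  have c0: "c > 0" unfolding c_def cn_def using L1 by simp
  have s0: "s \<ge> 0" unfolding s_def using L0 pi_gt3 by (intro add_nonneg_nonneg) auto
  have sL: "s \<le> L" using E2 unfolding s_def L_def .
  define u where "u = s/2 + \<gamma>"
  have xu: "x = c - u / c" using c0 unfolding x_def u_def dn_def c_def s_def L_def cn_def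
    by (simp add: field_simps)
  have uL: "u \<le> L" unfolding u_def using sL gL L_def by simp
  have u0: "u \<ge> 0" unfolding u_def using s0 g0 by simp
  have "u / c \<le> c / 2" using uL c2 c0 by (simp add: field_simps power2_eq_square)
  then have xc: "x \<ge> c / 2" using xu by simp
  have x0: "x > 0" using xc c0 by simp
  have "x\<^sup>2 = c\<^sup>2 + (u / c)\<^sup>2 - 2 * c * (u / c)" by (simp add: xu power2_diff)
  moreover have "2 * c * (u / c) = 2 * u" using c0 by simp
  ultimately have "x\<^sup>2 = c\<^sup>2 - 2 * u + (u / c)\<^sup>2" by simp
  then have "x\<^sup>2 \<ge> 2 * L - s - 2 * \<gamma>" using c2 unfolding u_def by simp
  then have ex: "L - s/2 - x\<^sup>2/2 \<le> \<gamma>" by simp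
  have "real n * Qt x \<le> real n * (std_normal_density x / x)"
    using Qt_upper[OF x0] by (intro mult_left_mono) auto
  also have "\<dots> = c * exp (L - s/2 - x\<^sup>2/2) / x"
    using key_identity[OF L1, of x] unfolding c_def L_def s_def by simp
  also have "\<dots> \<le> c * exp \<gamma> / (c / 2)"
    using ex c0 xc x0 by (intro frac_le mult_left_mono) auto
  also have "\<dots> = 2 * exp \<gamma>" using c0 by simp
  finally show ?thesis unfolding x_def .
qed

lemma lower_n:
  assumes L1: "1 \<le> ln (real n)" and E2: "ln (ln (real n)) + ln (4*pi) \<le> ln (real n)"
    and E3: "(ln (ln (real n)) + ln (4*pi))\<^sup>2 \<le> 8 * ln (real n)"
    and E4: "a\<^sup>2 \<le> 2 * ln (real n)" and E5: "1 \<le> dn n - a / cn n"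
    and a0: "0 \<le> a"
  shows "real n * Qt (dn n - a / cn n) \<ge> exp (a - 7/2)"
proof -
  define L where "L = ln (real n)"
  define s where "s = ln L + ln (4*pi)"
  define c where "c = cn n"
  define x where "x = dn n - a / cn n"
  have L0: "L \<ge> 1" using L1 L_def by simp
  have c2: "c\<^sup>2 = 2 * L" unfolding c_def cn_def L_def using L0 L_def by simp
  have c0: "c > 0" unfolding c_def cn_def using L1 by simp
  have s0: "s \<ge> 0" unfolding s_def using L0 pi_gt3 by (intro add_nonneg_nonneg) auto
  define u where "u = s/2 + a"
  have xu: "x = c - u / c" using c0 unfolding x_def u_def dn_def c_def s_def L_def cn_def
    by (simp add: field_simps)
  have u0: "u \<ge> 0" unfolding u_def using s0 a0 by simp
  have x1: "x \<ge> 1" using E5 x_def by simp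
  have xc: "x \<le> c" using xu u0 c0 by simp
  have h1: "0 \<le> (s/2)\<^sup>2 + a\<^sup>2 - 2*(s/2)*a" using power2_diff[of "s/2" a] zero_le_power2[of "s/2 - a"] by linarith
  have h2: "u\<^sup>2 = (s/2)\<^sup>2 + a\<^sup>2 + 2*(s/2)*a" unfolding u_def by (simp add: power2_sum)
  have "u\<^sup>2 \<le> 2 * ((s/2)\<^sup>2 + a\<^sup>2)" using h1 h2 by (smt (verit))
  also have "\<dots> \<le> 8 * L" using E3 E4 unfolding s_def L_def by (simp add: power2_eq_square)
  finally have u2: "u\<^sup>2 \<le> 8 * L" .
  have "x\<^sup>2 = c\<^sup>2 + (u / c)\<^sup>2 - 2 * c * (u / c)" by (simp add: xu power2_diff)
  moreover have "2 * c * (u / c) = 2 * u" using c0 by simp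
  ultimately have "x\<^sup>2 = c\<^sup>2 - 2 * u + u\<^sup>2 / c\<^sup>2" by (simp add: power_divide)
  also have "u\<^sup>2 / c\<^sup>2 \<le> 4" using u2 c2 L0 by (simp add: divide_le_eq)
  finally have "x\<^sup>2 \<le> 2 * L - s - 2 * a + 4" using c2 unfolding u_def by simp
  then have ex: "L - s/2 - x\<^sup>2/2 \<ge> a - 2" by simp
  have "exp (a - 7/2) = exp ((a - 2) - 3/2)" by simp
  also have "\<dots> = exp (a - 2) / exp (3/2)" by (rule exp_diff)
  also have "\<dots> = c * exp (a - 2) / (c * exp (3/2))" using c0 by simp
  also have "\<dots> \<le> c * exp (L - s/2 - x\<^sup>2/2) / (x * exp (3/2))"
    using ex c0 xc x1 by (intro frac_le mult_left_mono mult_right_mono) auto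
  also have "\<dots> = real n * std_normal_density x / (x * exp (3/2))"
    using key_identity[OF L1, of x] unfolding c_def L_def s_def by simp
  also have "\<dots> \<le> real n * Qt x"
    using mult_left_mono[OF Qt_lower[OF x1], of "real n"] by (simp add: times_divide_eq_right)
  finally show ?thesis unfolding x_def .
qed


context prob_space begin

lemma rv_meas: "distributed M lborel V std_normal_density \<Longrightarrow> V \<in> borel_measurable M"
  using distributed_measurable[of M lborel V] by simp

lemma prob_gt: "distributed M lborel V std_normal_density \<Longrightarrow> prob {\<omega>\<in>space M. x < V \<omega>} = Qt x"
  using prob_gt_Qt[OF prob_space_axioms] by blast

lemma prob_le: assumes "distributed M lborel V std_normal_density"
  shows "prob {\<omega>\<in>space M. V \<omega> \<le> x} = 1 - Qt x"
proof -
  have m: "{\<omega>\<in>space M. x < V \<omega>} \<in> events" using rv_meas[OF assms] by measurable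
  have "{\<omega>\<in>space M. V \<omega> \<le> x} = space M - {\<omega>\<in>space M. x < V \<omega>}" by auto
  then show ?thesis using prob_compl[OF m] prob_gt[OF assms] by simp
qed

lemma card_as_sum: "real (card {l\<in>A. P l}) = (\<Sum>l\<in>A. if P l then 1 else 0)" if "finite A"
  using that by (simp add: sum.If_cases Int_def)

lemma count_meas:
  fixes V :: "nat \<Rightarrow> 'a \<Rightarrow> real" and x :: real
  assumes "\<And>l. l \<in> A \<Longrightarrow> V l \<in> borel_measurable M" "finite A"
  shows "(\<lambda>\<omega>. real (card {l\<in>A. x < V l \<omega>})) \<in> borel_measurable M"
proof -
  have "(\<lambda>\<omega>. (\<Sum>l\<in>A. if x < V l \<omega> then 1 else 0::real)) \<in> borel_measurable M"
    using assms(1) by (intro borel_measurable_sum) (measurable, auto intro: borel_open)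
  then show ?thesis using card_as_sum[OF assms(2)] by simp
qed

lemma markov_count:
  fixes V :: "nat \<Rightarrow> 'a \<Rightarrow> real" and x :: real
  assumes D: "\<And>l. l \<in> A \<Longrightarrow> distributed M lborel (V l) std_normal_density" and fin: "finite A"
    and k: "k > 0"
  shows "prob {\<omega>\<in>space M. k \<le> real (card {l\<in>A. x < V l \<omega>})} \<le> real (card A) * Qt x / k"
proof -
  have meas: "\<And>l. l \<in> A \<Longrightarrow> V l \<in> borel_measurable M" using D rv_meas by blast
  define u where "u = (\<lambda>\<omega>. (\<Sum>l\<in>A. indicator {\<omega>\<in>space M. x < V l \<omega>} \<omega> :: real))"
  have ev: "\<And>l. l \<in> A \<Longrightarrow> {\<omega>\<in>space M. x < V l \<omega>} \<in> events"
    using meas by measurable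
  have int: "integrable M u" unfolding u_def
  proof (rule Bochner_Integration.integrable_sum)
    fix l assume "l \<in> A"
    then show "integrable M (indicator {\<omega>\<in>space M. x < V l \<omega>} :: 'a \<Rightarrow> real)"
      using ev by (intro integrable_real_indicator) (auto simp: emeasure_eq_measure)
  qed
  have eq: "\<And>\<omega>. \<omega> \<in> space M \<Longrightarrow> real (card {l\<in>A. x < V l \<omega>}) = u \<omega>"
    unfolding u_def using card_as_sum[OF fin] by (simp add: indicator_def of_bool_def)
  have "{\<omega>\<in>space M. k \<le> real (card {l\<in>A. x < V l \<omega>})} = {\<omega>\<in>space M. k \<le> u \<omega>}"
    using eq by auto
  also have "prob \<dots> \<le> (\<integral>\<omega>. u \<omega> \<partial>M) / k"
    using int k by (intro integral_Markov_inequality_measure[where A="space M"]) (auto simp: u_def intro!: AE_I2 sum_nonneg)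
  also have "(\<integral>\<omega>. u \<omega> \<partial>M) = (\<Sum>l\<in>A. prob {\<omega>\<in>space M. x < V l \<omega>})"
    unfolding u_def using ev by (subst Bochner_Integration.integral_sum) (auto simp: emeasure_eq_measure)
  also have "\<dots> = real (card A) * Qt x" using prob_gt D by simp
  finally show ?thesis .
qed


lemma prob_all_le:
  fixes X :: "nat \<Rightarrow> 'a \<Rightarrow> real" and Y :: "nat \<Rightarrow> nat \<Rightarrow> 'a \<Rightarrow> real"
  assumes D: "\<And>i. 1 \<le> i \<Longrightarrow> distributed M lborel (X i) std_normal_density"
    and I: "indep_vars (\<lambda>_. borel) (\<lambda>k. case k of Inl i \<Rightarrow> X i | Inr (i, j) \<Rightarrow> Y i j)
           (Inl ` {i. 1 \<le> i} \<union> Inr ` {(i, j). 1 \<le> i \<and> i < j})"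
    and S: "finite S" "S \<noteq> {}" "S \<subseteq> {1..}"
  shows "prob {\<omega>\<in>space M. \<forall>l\<in>S. X l \<omega> \<le> x} = (1 - Qt x) ^ card S"
proof -
  let ?F = "\<lambda>k. case k of Inl i \<Rightarrow> X i | Inr (i, j) \<Rightarrow> Y i j"
  have "prob (\<Inter>k\<in>Inl ` S. ?F k -` {..x} \<inter> space M) = (\<Prod>k\<in>Inl ` S. prob (?F k -` {..x} \<inter> space M))"
    using S by (intro indep_varsD[OF I]) auto
  moreover have "(\<Inter>k\<in>Inl ` S. ?F k -` {..x} \<inter> space M) = {\<omega>\<in>space M. \<forall>l\<in>S. X l \<omega> \<le> x}"
    using S(2) by auto
  moreover have "(\<Prod>k\<in>Inl ` S. prob (?F k -` {..x} \<inter> space M)) = (\<Prod>l\<in>S. prob {\<omega>\<in>space M. X l \<omega> \<le> x})"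
    by (subst prod.reindex) (auto intro!: prod.cong arg_cong[where f=prob])
  moreover have "\<And>l. l\<in>S \<Longrightarrow> prob {\<omega>\<in>space M. X l \<omega> \<le> x} = 1 - Qt x" using prob_le D S(3) by auto
  ultimately show ?thesis by simp
qed

lemma prob_lt_neg:
  assumes D: "distributed M lborel V std_normal_density"
  shows "prob {\<omega>\<in>space M. V \<omega> < - y} = Qt y"
proof -
  have "distributed M lborel (\<lambda>x. 0 + -1 * V x) (normal_density (0 + -1 * 0) (\<bar>-1\<bar> * 1))"
    using D by (intro normal_density_affine) auto
  then have D': "distributed M lborel (\<lambda>x. - V x) std_normal_density" by simp
  have "{\<omega>\<in>space M. V \<omega> < - y} = {\<omega>\<in>space M. y < - V \<omega>}" by auto
  then show ?thesis using prob_gt[OF D'] by simp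
qed

end


lemma ord_stat_meas:
  fixes f :: "nat \<Rightarrow> 'a \<Rightarrow> real"
  assumes m: "\<And>l. l \<in> {1..n} \<Longrightarrow> f l \<in> borel_measurable M" and k: "1 \<le> k" "k \<le> n"
  shows "(\<lambda>\<omega>. ord_stat (\<lambda>l. f l \<omega>) n k) \<in> borel_measurable M"
  unfolding borel_measurable_iff_greater
proof
  fix t :: real
  have g: "(\<lambda>\<omega>. real (card {l\<in>{1..n}. t < f l \<omega>})) \<in> borel_measurable M"
  proof -
    have "(\<lambda>\<omega>. (\<Sum>l\<in>{1..n}. if t < f l \<omega> then 1 else 0::real)) \<in> borel_measurable M"
      using m by (intro borel_measurable_sum) (measurable, auto intro: borel_open)
    moreover have "\<And>\<omega>. real (card {l\<in>{1..n}. t < f l \<omega>}) = (\<Sum>l\<in>{1..n}. if t < f l \<omega> then 1 else 0::real)"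
      by (simp add: sum.If_cases Int_def)
    ultimately show ?thesis by simp
  qed
  have "{\<omega> \<in> space M. t < ord_stat (\<lambda>l. f l \<omega>) n k} = {\<omega> \<in> space M. real k \<le> real (card {l\<in>{1..n}. t < f l \<omega>})}"
    using ord_stat_gt[OF k] by auto
  also have "\<dots> \<in> sets M" using g by measurable
  finally show "{\<omega> \<in> space M. t < ord_stat (\<lambda>l. f l \<omega>) n k} \<in> sets M" .
qed

lemma finite_pairs: "finite (pairs n)"
  by (rule finite_subset[of _ "{1..n} \<times> {1..n}"]) (auto simp: pairs_def)

lemma argmax_meas:
  fixes W :: "nat \<Rightarrow> nat \<Rightarrow> 'a \<Rightarrow> real"
  assumes m: "\<And>i j. (i, j) \<in> pairs n \<Longrightarrow> W i j \<in> borel_measurable M"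
  shows "{\<omega>\<in>space M. argmax_in (\<lambda>i j. W i j \<omega>) n K} \<in> sets M"
proof -
  have "{\<omega>\<in>space M. argmax_in (\<lambda>i j. W i j \<omega>) n K} =
    {\<omega>\<in>space M. \<forall>p\<in>pairs n. (K < fst p \<or> K < snd p) \<longrightarrow> (\<exists>q\<in>pairs n. W (fst p) (snd p) \<omega> < W (fst q) (snd q) \<omega>)}"
    unfolding argmax_in_iff ..
  also have "\<dots> \<in> sets M"
  proof (intro sets.sets_Collect_finite_All finite_pairs sets.sets_Collect_imp sets.sets_Collect_finite_Ex sets.sets_Collect_const)
    fix p q assume p: "p \<in> pairs n" and q: "q \<in> pairs n"
    have "W (fst p) (snd p) \<in> borel_measurable M" using m p by (cases p) auto
    moreover have "W (fst q) (snd q) \<in> borel_measurable M" using m q by (cases q) auto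
    ultimately show "{\<omega> \<in> space M. W (fst p) (snd p) \<omega> < W (fst q) (snd q) \<omega>} \<in> sets M"
      by (rule borel_measurable_less)
  qed
  finally show ?thesis .
qed

lemma telescope:
  assumes "1 \<le> K" "K \<le> n"
  shows "(\<Sum>j\<in>{K<..n}. 1 / (real j * (real j - 1))) = 1 / real K - 1 / real n"
  using assms(2)
proof (induction n)
  case 0 then show ?case using assms by simp
next
  case (Suc n)
  show ?case
  proof (cases "K = Suc n")
    case True then show ?thesis by simp
  next
    case False
    then have Kn: "K \<le> n" using Suc.prems by simp
    have n1: "real n \<ge> 1" using Kn assms by simp
    have "{K<..Suc n} = insert (Suc n) {K<..n}" using Kn by auto
    then have "(\<Sum>j\<in>{K<..Suc n}. 1 / (real j * (real j - 1))) = 1 / (real (Suc n) * real n) + (1 / real K - 1 / real n)"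
      using Suc.IH[OF Kn] by simp
    also have "\<dots> = 1 / real K - 1 / real (Suc n)"
    proof -
      have "1 / (real (Suc n) * real n) = 1 / real n - 1 / real (Suc n)" using n1 by (simp add: field_simps)
      then show ?thesis by linarith
    qed
    finally show ?thesis .
  qed
qed

lemma geom_bound:
  fixes q :: real
  assumes "0 \<le> q" "q < 1"
  shows "(\<Sum>k\<in>{m..N}. q ^ k) \<le> q ^ m / (1 - q)"
proof (cases "N < m")
  case True then show ?thesis using assms by simp
next
  case False
  then have "(\<Sum>k\<in>{m..N}. q ^ k) = (q ^ m - q ^ Suc N) / (1 - q)" using assms by (simp add: sum_gp)
  also have "\<dots> \<le> q ^ m / (1 - q)" using assms by (intro divide_right_mono) auto
  finally show ?thesis .
qed


definition gam :: "nat \<Rightarrow> real" where "gam k = real k * ln 2 / 2"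
definition KS :: "nat \<Rightarrow> nat \<Rightarrow> nat set" where "KS n K = {k. 2^k \<le> n \<and> K < 2^(k+1)}"
definition PS :: "nat \<Rightarrow> nat \<Rightarrow> (nat \<times> nat) set" where "PS n K = (SIGMA j:{K<..n}. {1..<j})"
definition tt :: "real \<Rightarrow> real \<Rightarrow> real \<Rightarrow> nat \<Rightarrow> real" where
  "tt a y0 c j = (gam (floor_log j) - a) / (sqrt 2 * c) - y0 - 1"

lemma finite_KS: "finite (KS n K)"
proof (rule finite_subset[of _ "{..n}"])
  show "KS n K \<subseteq> {..n}"
  proof
    fix k assume "k \<in> KS n K"
    then have "2^k \<le> n" by (simp add: KS_def)
    then have "k \<le> n" using le_trans[OF less_imp_le[OF less_exp]] by blast
    then show "k \<in> {..n}" by simp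
  qed
qed simp

lemma finite_PS: "finite (PS n K)" unfolding PS_def by auto

lemma z_gt_iff: "(c::real) > 0 \<Longrightarrow> (- t < c * (x - d)) \<longleftrightarrow> (d - t / c < x)"
  by (simp add: field_simps)

lemma fixed_n_bound:
  fixes M :: "'a measure"
    and X :: "nat \<Rightarrow> 'a \<Rightarrow> real"
    and Y :: "nat \<Rightarrow> nat \<Rightarrow> 'a \<Rightarrow> real"
    and c :: real
  assumes P: "prob_space M"
    and DX: "\<And>i. 1 \<le> i \<Longrightarrow> distributed M lborel (X i) std_normal_density"
    and DY: "\<And>i j. 1 \<le> i \<Longrightarrow> i < j \<Longrightarrow> distributed M lborel (Y i j) std_normal_density"
    and I: "prob_space.indep_vars M (\<lambda>_. borel)
           (\<lambda>k. case k of Inl i \<Rightarrow> X i | Inr (i, j) \<Rightarrow> Y i j)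
           (Inl ` {i. 1 \<le> i} \<union> Inr ` {(i, j). 1 \<le> i \<and> i < j})"
    and c0: "c > 0" and a0: "0 \<le> a"
    and L1: "1 \<le> ln (real n)" and E2: "ln (ln (real n)) + ln (4*pi) \<le> ln (real n)"
    and E3: "(ln (ln (real n)) + ln (4*pi))\<^sup>2 \<le> 8 * ln (real n)"
    and E4: "a\<^sup>2 \<le> 2 * ln (real n)" and E5: "1 \<le> dn n - a / cn n"
    and K2: "2 \<le> K"
  shows "measure M {\<omega> \<in> space M.
              argmax_in (\<lambda>i j. (ord_stat (\<lambda>l. cn n * (X l \<omega> - dn n)) n i
                                 + ord_stat (\<lambda>l. cn n * (X l \<omega> - dn n)) n j) / sqrt 2
                                + c * Y i j \<omega>) n K}
     \<ge> 1 - (2 * exp (- exp (a - 7/2) / 3) + (\<Sum>k\<in>KS n K. 2 * exp (gam k) / 2^k) + Qt y0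
            + (\<Sum>p\<in>PS n K. Qt (tt a y0 c (fst p))))"
proof -
  interpret prob_space M by (rule P)
  define Z where "Z l \<omega> = cn n * (X l \<omega> - dn n)" for l \<omega>
  define T where "T = {\<omega> \<in> space M.
              argmax_in (\<lambda>i j. (ord_stat (\<lambda>l. Z l \<omega>) n i + ord_stat (\<lambda>l. Z l \<omega>) n j) / sqrt 2
                                + c * Y i j \<omega>) n K}"
  have n3: "n \<ge> 3"
  proof (rule ccontr)
    assume "\<not> n \<ge> 3"
    then have "real n \<le> 2" by simp
    moreover have "real n > 0" using L1 by (cases "n = 0") auto
    ultimately have "ln (real n) \<le> ln 2" by simp
    then show False using L1 ln_2_less_1 by simp
  qed
  have cpos: "cn n > 0" unfolding cn_def using L1 by simp
  define thrA where "thrA = dn n - a / cn n"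
  define m where "m = n div 2"
  have m1: "m \<ge> 1" using n3 m_def by simp
  have m3: "real m \<ge> real n / 3" using n3 unfolding m_def by linarith
  define S1 where "S1 = {1..m}"
  define S2 where "S2 = {m+1..2*m}"
  define BA1 where "BA1 = {\<omega>\<in>space M. \<forall>l\<in>S1. X l \<omega> \<le> thrA}"
  define BA2 where "BA2 = {\<omega>\<in>space M. \<forall>l\<in>S2. X l \<omega> \<le> thrA}"
  define BB where "BB k = {\<omega>\<in>space M. real (2^k) \<le> real (card {l\<in>{1..n}. dn n - gam k / cn n < X l \<omega>})}" for k
  define BC1 where "BC1 = {\<omega>\<in>space M. Y 1 2 \<omega> < - y0}"
  define BC2 where "BC2 p = {\<omega>\<in>space M. tt a y0 c (fst p) < Y (snd p) (fst p) \<omega>}" for p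
  have Xm: "\<And>l. 1 \<le> l \<Longrightarrow> X l \<in> borel_measurable M" using DX rv_meas by blast
  have Ym: "\<And>i j. 1 \<le> i \<Longrightarrow> i < j \<Longrightarrow> Y i j \<in> borel_measurable M" using DY rv_meas by blast
  have Zm: "\<And>l. l \<in> {1..n} \<Longrightarrow> (\<lambda>\<omega>. Z l \<omega>) \<in> borel_measurable M"
    unfolding Z_def using Xm by measurable

  have incl: "space M - T \<subseteq> BA1 \<union> BA2 \<union> (\<Union>k\<in>KS n K. BB k) \<union> BC1 \<union> (\<Union>p\<in>PS n K. BC2 p)"
  proof
    fix \<omega> assume \<omega>: "\<omega> \<in> space M - T"
    show "\<omega> \<in> BA1 \<union> BA2 \<union> (\<Union>k\<in>KS n K. BB k) \<union> BC1 \<union> (\<Union>p\<in>PS n K. BC2 p)"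
    proof (rule ccontr)
      assume nb: "\<omega> \<notin> BA1 \<union> BA2 \<union> (\<Union>k\<in>KS n K. BB k) \<union> BC1 \<union> (\<Union>p\<in>PS n K. BC2 p)"
      have zg: "\<And>l t. (- t < Z l \<omega>) \<longleftrightarrow> (dn n - t / cn n < X l \<omega>)"
        unfolding Z_def using z_gt_iff[OF cpos] by blast
      have A: "2 \<le> card {l\<in>{1..n}. - a < Z l \<omega>}"
      proof -
        obtain l1 where l1: "l1 \<in> S1" "thrA < X l1 \<omega>" using nb \<omega> by (auto simp: BA1_def not_le)
        obtain l2 where l2: "l2 \<in> S2" "thrA < X l2 \<omega>" using nb \<omega> by (auto simp: BA2_def not_le)
        have ne: "l1 \<noteq> l2" using l1 l2 by (auto simp: S1_def S2_def)
        have "{l1, l2} \<subseteq> {l\<in>{1..n}. - a < Z l \<omega>}"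
          using l1 l2 zg m_def unfolding S1_def S2_def thrA_def by auto
        then have "card {l1, l2} \<le> card {l\<in>{1..n}. - a < Z l \<omega>}" by (intro card_mono) auto
        then show ?thesis using ne by simp
      qed
      have B: "card {l\<in>{1..n}. - gam k < Z l \<omega>} < 2^k" if "2^k \<le> n" "K < 2^(k+1)" for k
      proof -
        have "k \<in> KS n K" using that by (simp add: KS_def)
        then have "\<omega> \<notin> BB k" using nb by auto
        then have "\<not> real (2^k) \<le> real (card {l\<in>{1..n}. dn n - gam k / cn n < X l \<omega>})"
          using \<omega> by (auto simp: BB_def)
        then show ?thesis using zg by (simp add: not_le)
      qed
      have C: "c * Y i j \<omega> < c * Y 1 2 \<omega> + (gam (floor_log j) - a) / sqrt 2"
        if ij: "(i, j) \<in> pairs n" "K < j" for i j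
      proof -
        have "(j, i) \<in> PS n K" using ij by (auto simp: PS_def pairs_def)
        then have "\<omega> \<notin> BC2 (j, i)" using nb by auto
        then have y1: "Y i j \<omega> \<le> tt a y0 c j" using \<omega> by (auto simp: BC2_def)
        have y2: "- y0 \<le> Y 1 2 \<omega>" using nb \<omega> by (auto simp: BC1_def)
        have "c * Y i j \<omega> \<le> c * tt a y0 c j" using y1 c0 by simp
        also have "c * tt a y0 c j = (gam (floor_log j) - a) / sqrt 2 - c * y0 - c"
          unfolding tt_def using c0 by (simp add: field_simps)
        also have "\<dots> < c * Y 1 2 \<omega> + (gam (floor_log j) - a) / sqrt 2"
          using y2 c0 mult_left_mono[OF y2, of c] by simp
        finally show ?thesis .
      qed
      have "argmax_in (\<lambda>i j. (ord_stat (\<lambda>l. Z l \<omega>) n i + ord_stat (\<lambda>l. Z l \<omega>) n j) / sqrt 2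
                                + c * Y i j \<omega>) n K"
        using deterministic[of K n a "\<lambda>l. Z l \<omega>" gam c "\<lambda>i j. Y i j \<omega>"] K2 n3 A B C by auto
      then show False using \<omega> unfolding T_def by auto
    qed
  qed

  have le_ev: "{\<omega>\<in>space M. X l \<omega> \<le> t} \<in> events" if "1 \<le> l" for l t
    using Xm[OF that] by measurable
  have evBA1: "BA1 \<in> events" unfolding BA1_def
    by (intro sets.sets_Collect_finite_All) (auto simp: S1_def intro!: le_ev)
  have evBA2: "BA2 \<in> events" unfolding BA2_def
    by (intro sets.sets_Collect_finite_All) (auto simp: S2_def intro!: le_ev)
  have evBB: "BB k \<in> events" for k
  proof -
    have "(\<lambda>\<omega>. real (card {l\<in>{1..n}. dn n - gam k / cn n < X l \<omega>})) \<in> borel_measurable M"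
      using Xm by (intro count_meas) auto
    then show ?thesis unfolding BB_def by measurable
  qed
  have evBC1: "BC1 \<in> events" unfolding BC1_def using Ym[of 1 2] by measurable
  have evBC2: "BC2 p \<in> events" if pPS: "p \<in> PS n K" for p
  proof -
    obtain j i where p: "p = (j, i)" "1 \<le> i" "i < j" using pPS unfolding PS_def by (cases p) auto
    show ?thesis unfolding BC2_def p using Ym[OF p(2,3)] by simp measurable
  qed
  have evT: "T \<in> events"
    unfolding T_def
  proof (rule argmax_meas[where W="\<lambda>i j \<omega>. (ord_stat (\<lambda>l. Z l \<omega>) n i + ord_stat (\<lambda>l. Z l \<omega>) n j) / sqrt 2 + c * Y i j \<omega>"])
    fix i j assume ij: "(i, j) \<in> pairs n"
    then have ij': "1 \<le> i" "i < j" "j \<le> n" by (auto simp: pairs_def)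
    have "(\<lambda>\<omega>. ord_stat (\<lambda>l. Z l \<omega>) n i) \<in> borel_measurable M"
      using ij' by (intro ord_stat_meas Zm) auto
    moreover have "(\<lambda>\<omega>. ord_stat (\<lambda>l. Z l \<omega>) n j) \<in> borel_measurable M"
      using ij' by (intro ord_stat_meas Zm) auto
    moreover have "Y i j \<in> borel_measurable M" using Ym ij' by auto
    ultimately show "(\<lambda>\<omega>. (ord_stat (\<lambda>l. Z l \<omega>) n i + ord_stat (\<lambda>l. Z l \<omega>) n j) / sqrt 2 + c * Y i j \<omega>) \<in> borel_measurable M"
      by measurable
  qed

  define Q where "Q = Qt thrA"
  have Q01: "0 \<le> Q" "Q \<le> 1"
  proof -
    have p1: "prob {\<omega> \<in> space M. thrA < X 1 \<omega>} \<le> 1" by (rule prob_le_1)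
    have p2: "prob {\<omega> \<in> space M. thrA < X 1 \<omega>} = Qt thrA" by (rule prob_gt[OF DX]) simp
    show "0 \<le> Q" unfolding Q_def by (rule Qt_nonneg)
    show "Q \<le> 1" unfolding Q_def using p1 p2 by linarith
  qed
  have pBA: "prob BA1 \<le> exp (- exp (a - 7/2) / 3)" "prob BA2 \<le> exp (- exp (a - 7/2) / 3)"
  proof -
    have nQ: "real n * Q \<ge> exp (a - 7/2)" unfolding Q_def thrA_def using lower_n[OF L1 E2 E3 E4 E5 a0] .
    have "(1 - Q) ^ m \<le> exp (- Q) ^ m"
      using Q01 exp_ge_add_one_self[of "-Q"] by (intro power_mono) auto
    also have "\<dots> = exp (- (real m * Q))" by (simp add: exp_of_nat_mult[symmetric])
    also have "\<dots> \<le> exp (- exp (a - 7/2) / 3)"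
    proof -
      have "real m * Q \<ge> real n / 3 * Q" using m3 Q01 by (intro mult_right_mono) auto
      then show ?thesis using nQ by simp
    qed
    finally have *: "(1 - Q) ^ m \<le> exp (- exp (a - 7/2) / 3)" .
    have "prob BA1 = (1 - Q) ^ card S1" unfolding BA1_def Q_def
      using m1 by (intro prob_all_le[OF DX I]) (auto simp: S1_def)
    then show "prob BA1 \<le> exp (- exp (a - 7/2) / 3)" using * by (simp add: S1_def)
    have "prob BA2 = (1 - Q) ^ card S2" unfolding BA2_def Q_def
      using m1 by (intro prob_all_le[OF DX I]) (auto simp: S2_def)
    then show "prob BA2 \<le> exp (- exp (a - 7/2) / 3)" using * by (simp add: S2_def)
  qed
  have pBB: "prob (BB k) \<le> 2 * exp (gam k) / 2^k" if "k \<in> KS n K" for k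
  proof -
    have k: "2^k \<le> n" using that by (simp add: KS_def)
    have g0: "0 \<le> gam k" by (simp add: gam_def)
    have k': "(2::real)^k \<le> real n" using k by (metis of_nat_le_iff of_nat_numeral of_nat_power)
    have "ln ((2::real)^k) \<le> ln (real n)" using k' n3 by (subst ln_le_cancel_iff) auto
    then have gL: "gam k \<le> ln (real n) / 2" by (simp add: gam_def ln_realpow)
    have "prob (BB k) \<le> real (card {1..n}) * Qt (dn n - gam k / cn n) / real (2^k)"
      unfolding BB_def using DX by (intro markov_count) auto
    also have "\<dots> = real n * Qt (dn n - gam k / cn n) / 2^k" by simp
    also have "\<dots> \<le> 2 * exp (gam k) / 2^k"
      using upper_n[OF L1 E2 g0 gL] by (intro divide_right_mono) auto
    finally show ?thesis .
  qed
  have pBC1: "prob BC1 = Qt y0" unfolding BC1_def using prob_lt_neg[OF DY[of 1 2]] by simp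
  have pBC2: "prob (BC2 p) = Qt (tt a y0 c (fst p))" if pPS: "p \<in> PS n K" for p
  proof -
    obtain j i where p: "p = (j, i)" "1 \<le> i" "i < j" using pPS unfolding PS_def by (cases p) auto
    show ?thesis unfolding BC2_def p using prob_gt[OF DY[OF p(2,3)]] by simp
  qed

  have "prob (space M - T) \<le> prob (BA1 \<union> BA2 \<union> (\<Union>k\<in>KS n K. BB k) \<union> BC1 \<union> (\<Union>p\<in>PS n K. BC2 p))"
    using incl evBA1 evBA2 evBB evBC1 evBC2 finite_KS finite_PS
    by (intro finite_measure_mono) auto
  also have "\<dots> \<le> prob BA1 + prob BA2 + prob (\<Union>k\<in>KS n K. BB k) + prob BC1 + prob (\<Union>p\<in>PS n K. BC2 p)"
  proof -
    have u1: "(\<Union>k\<in>KS n K. BB k) \<in> events" using evBB finite_KS by auto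
    have u2: "(\<Union>p\<in>PS n K. BC2 p) \<in> events" using evBC2 finite_PS by auto
    show ?thesis
      using measure_Un_le[of "BA1 \<union> BA2 \<union> (\<Union>k\<in>KS n K. BB k) \<union> BC1" M "\<Union>p\<in>PS n K. BC2 p"]
        measure_Un_le[of "BA1 \<union> BA2 \<union> (\<Union>k\<in>KS n K. BB k)" M BC1]
        measure_Un_le[of "BA1 \<union> BA2" M "\<Union>k\<in>KS n K. BB k"]
        measure_Un_le[of BA1 M BA2] evBA1 evBA2 evBC1 u1 u2
      by auto
  qed
  also have "\<dots> \<le> 2 * exp (- exp (a - 7/2) / 3) + (\<Sum>k\<in>KS n K. 2 * exp (gam k) / 2^k) + Qt y0
            + (\<Sum>p\<in>PS n K. Qt (tt a y0 c (fst p)))"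
  proof -
    have "prob (\<Union>k\<in>KS n K. BB k) \<le> (\<Sum>k\<in>KS n K. prob (BB k))"
      using finite_KS evBB by (intro measure_UNION_le) auto
    also have "\<dots> \<le> (\<Sum>k\<in>KS n K. 2 * exp (gam k) / 2^k)" using pBB by (intro sum_mono) auto
    finally have s1: "prob (\<Union>k\<in>KS n K. BB k) \<le> (\<Sum>k\<in>KS n K. 2 * exp (gam k) / 2^k)" .
    have "prob (\<Union>p\<in>PS n K. BC2 p) \<le> (\<Sum>p\<in>PS n K. prob (BC2 p))"
      using finite_PS evBC2 by (intro measure_UNION_le) auto
    also have "\<dots> = (\<Sum>p\<in>PS n K. Qt (tt a y0 c (fst p)))" using pBC2 by (intro sum.cong) auto
    finally have s2: "prob (\<Union>p\<in>PS n K. BC2 p) \<le> (\<Sum>p\<in>PS n K. Qt (tt a y0 c (fst p)))" .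
    show ?thesis using s1 s2 pBA pBC1 by linarith
  qed
  finally have "prob (space M - T) \<le> 2 * exp (- exp (a - 7/2) / 3) + (\<Sum>k\<in>KS n K. 2 * exp (gam k) / 2^k) + Qt y0
            + (\<Sum>p\<in>PS n K. Qt (tt a y0 c (fst p)))" .
  moreover have "prob (space M - T) = 1 - prob T" using prob_compl[OF evT] .
  ultimately show ?thesis unfolding T_def Z_def by linarith
qed


lemma exp_half_ln2: "exp (ln 2 / 2) = sqrt 2"
proof -
  have "sqrt (exp (ln 2)) = exp (ln 2 / 2)"
    by (rule real_sqrt_unique) (auto simp: power2_eq_square simp flip: exp_add)
  then show ?thesis by simp
qed

lemma SB_bound:
  fixes \<epsilon> :: real
  assumes \<epsilon>: "\<epsilon> > 0" and K2: "2 \<le> K" and KB: "2048 / \<epsilon>\<^sup>2 \<le> real K"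
  shows "(\<Sum>k\<in>KS n K. 2 * exp (gam k) / 2^k) \<le> \<epsilon> / 4"
proof -
  define k0 where "k0 = floor_log K"
  define q :: real where "q = sqrt 2 / 2"
  have q2: "q\<^sup>2 = 1/2" unfolding q_def by (simp add: power_divide)
  have q0: "0 \<le> q" unfolding q_def by simp
  have q34: "q \<le> 3/4"
  proof (rule power2_le_imp_le)
    show "q\<^sup>2 \<le> (3/4)\<^sup>2" using q2 by (simp add: power2_eq_square)
  qed simp
  have termq: "2 * exp (gam k) / 2^k = 2 * q^k" for k
  proof -
    have "exp (gam k) = exp (ln 2 / 2) ^ k" unfolding gam_def
      by (simp add: exp_of_nat_mult[symmetric] mult.commute)
    also have "\<dots> = sqrt 2 ^ k" by (simp add: exp_half_ln2)
    finally show ?thesis unfolding q_def by (simp add: power_divide)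
  qed
  have sub: "KS n K \<subseteq> {k0..n}"
  proof
    fix k assume k: "k \<in> KS n K"
    then have k1: "2^k \<le> n" and k2: "K < 2^(k+1)" by (auto simp: KS_def)
    have "k \<le> n" using le_trans[OF less_imp_le[OF less_exp] k1] .
    moreover have "k0 \<le> k"
    proof (rule ccontr)
      assume "\<not> k0 \<le> k"
      then have "k + 1 \<le> k0" by simp
      then have "(2::nat)^(k+1) \<le> 2^k0" by (rule power_increasing) simp
      also have "\<dots> \<le> K" unfolding k0_def using K2 by (intro floor_log_exp2_le) simp
      finally show False using k2 by simp
    qed
    ultimately show "k \<in> {k0..n}" by simp
  qed
  have "(\<Sum>k\<in>KS n K. 2 * exp (gam k) / 2^k) = (\<Sum>k\<in>KS n K. 2 * q^k)" using termq by simp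
  also have "\<dots> \<le> (\<Sum>k\<in>{k0..n}. 2 * q^k)" using sub q0 by (intro sum_mono2) auto
  also have "\<dots> = 2 * (\<Sum>k\<in>{k0..n}. q^k)" by (simp add: sum_distrib_left)
  also have "\<dots> \<le> 2 * (q^k0 / (1 - q))" using geom_bound[OF q0] q34 by (intro mult_left_mono) auto
  also have "\<dots> \<le> 2 * (q^k0 / (1/4))" using q34 q0
    by (intro mult_left_mono divide_left_mono) auto
  also have "\<dots> = 8 * q^k0" by simp
  also have "\<dots> \<le> \<epsilon> / 4"
  proof (rule power2_le_imp_le)
    have "(q^k0)\<^sup>2 = (q\<^sup>2)^k0" by (simp add: power_mult[symmetric] mult.commute)
    also have "\<dots> = (1/2)^k0" by (simp only: q2)
    finally have "(q^k0)\<^sup>2 = (1/2)^k0" .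
    also have "\<dots> = 1 / 2^k0" by (simp add: power_divide)
    also have "\<dots> \<le> 2 / real K"
    proof -
      have "K < 2 * 2^k0" unfolding k0_def by (rule floor_log_exp2_gt)
      then have "real K \<le> 2 * 2^k0" by (metis less_imp_le of_nat_le_iff of_nat_mult of_nat_numeral of_nat_power)
      then show ?thesis using K2 by (simp add: field_simps)
    qed
    finally have h: "(q^k0)\<^sup>2 \<le> 2 / real K" .
    have "(8 * q^k0)\<^sup>2 = 64 * (q^k0)\<^sup>2" by (simp add: power_mult_distrib)
    also have "\<dots> \<le> 128 / real K" using h by simp
    also have "\<dots> \<le> (\<epsilon> / 4)\<^sup>2"
    proof -
      have "2048 \<le> real K * \<epsilon>\<^sup>2" using KB \<epsilon> by (simp add: field_simps)
      then show ?thesis using K2 by (simp add: field_simps power_divide)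
    qed
    finally show "(8 * q^k0)\<^sup>2 \<le> (\<epsilon> / 4)\<^sup>2" .
  qed (use \<epsilon> in simp)
  finally show ?thesis .
qed


lemma tt_ge:
  assumes c0: "c > 0" and j: "j \<ge> 1"
  shows "tt a y0 c j \<ge> ((ln (real j) - ln 2)/2 - a)/(sqrt 2 * c) - y0 - 1"
proof -
  define f where "f = floor_log j"
  have "j < 2 * 2^f" unfolding f_def by (rule floor_log_exp2_gt)
  then have "real j < 2^(f+1)" by (metis of_nat_less_iff of_nat_numeral of_nat_power power_Suc Suc_eq_plus1)
  then have "ln (real j) < ln (2^(f+1))" using j by (subst ln_less_cancel_iff) auto
  also have "\<dots> = real (f+1) * ln 2" by (rule ln_realpow)
  finally have "(ln (real j) - ln 2)/2 \<le> gam f" unfolding gam_def by (simp add: algebra_simps)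
  then have "((ln (real j) - ln 2)/2 - a)/(sqrt 2 * c) \<le> (gam f - a)/(sqrt 2 * c)"
    using c0 by (intro divide_right_mono) auto
  then show ?thesis unfolding tt_def f_def by simp
qed

lemma SC_bound:
  fixes \<epsilon> :: real
  assumes c0: "c > 0" and \<epsilon>: "\<epsilon> > 0"
    and J1: "\<And>j. J1 \<le> j \<Longrightarrow> 1 \<le> \<alpha> * ln (real j) - \<beta> \<and> exp (- (\<alpha> * ln (real j) - \<beta>)\<^sup>2 / 2) \<le> 1 / real j ^ 3"
    and hform: "\<And>x. ((ln x - ln 2)/2 - a)/(sqrt 2 * c) - y0 - 1 = \<alpha> * ln x - \<beta>"
    and K2: "2 \<le> K" and KJ: "J1 \<le> K" and K4: "4/\<epsilon> \<le> real K"
  shows "(\<Sum>p\<in>PS n K. Qt (tt a y0 c (fst p))) \<le> \<epsilon>/4"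
proof -
  have "(\<Sum>p\<in>PS n K. Qt (tt a y0 c (fst p))) = (\<Sum>j\<in>{K<..n}. \<Sum>i\<in>{1..<j}. Qt (tt a y0 c j))"
    unfolding PS_def by (subst sum.Sigma) (auto simp: split_def)
  also have "\<dots> \<le> (\<Sum>j\<in>{K<..n}. 1 / (real j * (real j - 1)))"
  proof (rule sum_mono)
    fix j assume "j \<in> {K<..n}"
    then have jK: "K < j" by simp
    then have j2: "j \<ge> 3" using K2 by simp
    define h where "h = \<alpha> * ln (real j) - \<beta>"
    have h1: "1 \<le> h" and hb: "exp (- h\<^sup>2 / 2) \<le> 1 / real j ^ 3" using J1[of j] jK KJ unfolding h_def by auto
    have th: "h \<le> tt a y0 c j" using tt_ge[OF c0, of j a y0] j2 hform[of "real j"] unfolding h_def by simp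
    have "Qt (tt a y0 c j) \<le> exp (- (tt a y0 c j)\<^sup>2 / 2)" using th h1 by (intro Qt_gauss) simp
    also have "\<dots> \<le> exp (- h\<^sup>2 / 2)" using th h1 by (simp add: power_mono)
    also have "\<dots> \<le> 1 / real j ^ 3" by (rule hb)
    finally have q: "Qt (tt a y0 c j) \<le> 1 / real j ^ 3" .
    have "(\<Sum>i\<in>{1..<j}. Qt (tt a y0 c j)) = (real j - 1) * Qt (tt a y0 c j)" using j2 by simp
    also have "\<dots> \<le> (real j - 1) * (1 / real j ^ 3)" using q j2 by (intro mult_left_mono) auto
    also have "\<dots> \<le> 1 / (real j * (real j - 1))"
    proof -
      have "(real j - 1) * (real j - 1) \<le> real j * real j" using j2 by (intro mult_mono) auto
      then show ?thesis using j2 by (simp add: field_simps power3_eq_cube)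
    qed
    finally show "(\<Sum>i\<in>{1..<j}. Qt (tt a y0 c j)) \<le> 1 / (real j * (real j - 1))" .
  qed
  also have "\<dots> \<le> 1 / real K"
  proof (cases "K \<le> n")
    case True then show ?thesis using telescope[of K n] K2 by simp
  next
    case False then show ?thesis by simp
  qed
  also have "\<dots> \<le> \<epsilon> / 4" using K4 \<epsilon> K2 by (simp add: field_simps)
  finally show ?thesis .
qed


theorem lemma9p2:
  fixes M :: "'a measure"
    and X :: "nat \<Rightarrow> 'a \<Rightarrow> real"
    and Y :: "nat \<Rightarrow> nat \<Rightarrow> 'a \<Rightarrow> real"
    and c :: real
  assumes "prob_space M"
    and "\<And>i. 1 \<le> i \<Longrightarrow> distributed M lborel (X i) std_normal_density"
    and "\<And>i j. 1 \<le> i \<Longrightarrow> i < j \<Longrightarrow> distributed M lborel (Y i j) std_normal_density"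
    and "prob_space.indep_vars M (\<lambda>_. borel)
           (\<lambda>k. case k of Inl i \<Rightarrow> X i | Inr (i, j) \<Rightarrow> Y i j)
           (Inl ` {i. 1 \<le> i} \<union> Inr ` {(i, j). 1 \<le> i \<and> i < j})"
    and "c > 0"
  shows "\<forall>\<epsilon>>0. \<exists>C>0. \<forall>K::nat. real K \<ge> C \<longrightarrow>
           liminf (\<lambda>n. ereal (measure M {\<omega> \<in> space M.
              argmax_in (\<lambda>i j. (ord_stat (\<lambda>l. cn n * (X l \<omega> - dn n)) n i
                                 + ord_stat (\<lambda>l. cn n * (X l \<omega> - dn n)) n j) / sqrt 2
                                + c * Y i j \<omega>) n K}))
           \<ge> ereal (1 - \<epsilon>)"
proof (intro allI impI)
  fix \<epsilon> :: real assume \<epsilon>: "\<epsilon> > 0"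
  interpret prob_space M by (rule assms(1))
  have c0: "c > 0" by (rule assms(5))
  obtain a :: real where a0: "0 \<le> a" and a\<epsilon>: "2 * exp (- exp (a - 7/2) / 3) < \<epsilon>/4"
  proof -
    have "((\<lambda>(a::real). 2 * exp (- exp (a - 7/2) / 3)) \<longlongrightarrow> 0) at_top" by real_asymp
    then have "eventually (\<lambda>a. 2 * exp (- exp (a - 7/2) / 3) < \<epsilon>/4) at_top"
      using \<epsilon> by (intro order_tendstoD) auto
    moreover have "eventually (\<lambda>a::real. 0 \<le> a) at_top" by (rule eventually_ge_at_top)
    ultimately have "eventually (\<lambda>a. 0 \<le> a \<and> 2 * exp (- exp (a - 7/2) / 3) < \<epsilon>/4) at_top"
      by eventually_elim auto
    then obtain N where "\<forall>x\<ge>N. 0 \<le> x \<and> 2 * exp (- exp (x - 7/2) / 3) < \<epsilon>/4"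
      by (auto simp: eventually_at_top_linorder)
    then show ?thesis using that by auto
  qed
  obtain y0 where y1: "1 \<le> y0" and y\<epsilon>: "exp (- y0\<^sup>2 / 2) < \<epsilon>/4"
  proof -
    have "((\<lambda>y::real. exp (- y\<^sup>2 / 2)) \<longlongrightarrow> 0) at_top" by real_asymp
    then have "eventually (\<lambda>y. exp (- y\<^sup>2 / 2) < \<epsilon>/4) at_top"
      using \<epsilon> by (intro order_tendstoD) auto
    moreover have "eventually (\<lambda>y::real. 1 \<le> y) at_top" by (rule eventually_ge_at_top)
    ultimately have "eventually (\<lambda>y. 1 \<le> y \<and> exp (- y\<^sup>2 / 2) < \<epsilon>/4) at_top"
      by eventually_elim auto
    then obtain N where "\<forall>x\<ge>N. 1 \<le> x \<and> exp (- x\<^sup>2 / 2) < \<epsilon>/4"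
      by (auto simp: eventually_at_top_linorder)
    then show ?thesis using that by auto
  qed
  define \<alpha> where "\<alpha> = 1 / (2 * sqrt 2 * c)"
  define \<beta> where "\<beta> = (ln 2 / 2 + a) / (sqrt 2 * c) + y0 + 1"
  have \<alpha>0: "\<alpha> > 0" unfolding \<alpha>_def using c0 by simp
  have hform: "\<And>x. ((ln x - ln 2)/2 - a)/(sqrt 2 * c) - y0 - 1 = \<alpha> * ln x - \<beta>"
    unfolding \<alpha>_def \<beta>_def using c0 by (simp add: field_simps)
  have evh: "eventually (\<lambda>x. 1 \<le> \<alpha> * ln x - \<beta> \<and> exp (- (\<alpha> * ln x - \<beta>)\<^sup>2 / 2) \<le> 1 / x ^ 3) at_top"
  proof -
    have "eventually (\<lambda>x. 1 \<le> \<alpha> * ln x - \<beta>) at_top" using \<alpha>0 by real_asymp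
    moreover have "eventually (\<lambda>x. exp (- (\<alpha> * ln x - \<beta>)\<^sup>2 / 2) \<le> 1 / x ^ 3) at_top" using \<alpha>0 by real_asymp
    ultimately show ?thesis by eventually_elim auto
  qed
  have "eventually (\<lambda>j. 1 \<le> \<alpha> * ln (real j) - \<beta> \<and> exp (- (\<alpha> * ln (real j) - \<beta>)\<^sup>2 / 2) \<le> 1 / real j ^ 3) sequentially"
    using filterlim_iff[THEN iffD1, OF filterlim_real_sequentially, rule_format, OF evh] .
  then obtain J1 where J1: "\<And>j. J1 \<le> j \<Longrightarrow> 1 \<le> \<alpha> * ln (real j) - \<beta> \<and> exp (- (\<alpha> * ln (real j) - \<beta>)\<^sup>2 / 2) \<le> 1 / real j ^ 3"
    by (auto simp: eventually_sequentially)
  define C0 where "C0 = max (max 2 (real J1)) (max (4/\<epsilon>) (2048/\<epsilon>\<^sup>2))"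
  show "\<exists>C>0. \<forall>K::nat. real K \<ge> C \<longrightarrow>
           liminf (\<lambda>n. ereal (measure M {\<omega> \<in> space M.
              argmax_in (\<lambda>i j. (ord_stat (\<lambda>l. cn n * (X l \<omega> - dn n)) n i
                                 + ord_stat (\<lambda>l. cn n * (X l \<omega> - dn n)) n j) / sqrt 2
                                + c * Y i j \<omega>) n K}))
           \<ge> ereal (1 - \<epsilon>)"
  proof (intro exI[of _ C0] conjI allI impI)
    show "C0 > 0" unfolding C0_def by (simp add: less_max_iff_disj)
    fix K :: nat assume K: "C0 \<le> real K"
    have K2: "2 \<le> K" using K unfolding C0_def by (simp add: max_def split: if_splits)
    have KJ: "J1 \<le> K" using K unfolding C0_def by (simp add: max_def split: if_splits)
    have K4: "4/\<epsilon> \<le> real K" using K unfolding C0_def by (simp add: max_def split: if_splits)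
    have KB: "2048/\<epsilon>\<^sup>2 \<le> real K" using K unfolding C0_def by (simp add: max_def split: if_splits)
    have ev: "eventually (\<lambda>n. ereal (1 - \<epsilon>) \<le> ereal (measure M {\<omega> \<in> space M.
              argmax_in (\<lambda>i j. (ord_stat (\<lambda>l. cn n * (X l \<omega> - dn n)) n i
                                 + ord_stat (\<lambda>l. cn n * (X l \<omega> - dn n)) n j) / sqrt 2
                                + c * Y i j \<omega>) n K})) sequentially"
      using ev1 ev2 ev3 ev4[of a] ev5[of a]
    proof eventually_elim
      case (elim n)
      note fb = fixed_n_bound[OF assms(1) assms(2) assms(3) assms(4) c0 a0 elim K2, of y0]
      have "(\<Sum>k\<in>KS n K. 2 * exp (gam k) / 2^k) \<le> \<epsilon>/4" by (rule SB_bound[OF \<epsilon> K2 KB])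
      moreover have "(\<Sum>p\<in>PS n K. Qt (tt a y0 c (fst p))) \<le> \<epsilon>/4"
        by (rule SC_bound[OF c0 \<epsilon> J1 hform K2 KJ K4])
      moreover have "Qt y0 \<le> \<epsilon>/4" using Qt_gauss[OF y1] y\<epsilon> by simp
      ultimately show ?case using fb a\<epsilon> by simp
    qed
    then show "liminf (\<lambda>n. ereal (measure M {\<omega> \<in> space M.
              argmax_in (\<lambda>i j. (ord_stat (\<lambda>l. cn n * (X l \<omega> - dn n)) n i
                                 + ord_stat (\<lambda>l. cn n * (X l \<omega> - dn n)) n j) / sqrt 2
                                + c * Y i j \<omega>) n K}))
           \<ge> ereal (1 - \<epsilon>)" by (rule Liminf_bounded)
  qed
qed


end
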